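(* Let $S=\{R_0,\dots,R_d\}$ be a scheme on $X$, $\mathbb F$ a field, $x\in X$, $E_a^*=E_a^*(x)$, and let $\mathcal T_0$ be the $\mathbb F$-linear span of $\{E_i^*A_jE_\ell^*:R_i,R_j,R_\ell\in S\}$. If $\mathcal T_0$ is a unital $\mathbb F$-subalgebra of $M_X(\mathbb F)$, then $S$ has no bad pairs.
   Context: Let $X$ be a nonempty finite set. A scheme of class $d$ on $X$ is a partition $S=\{R_0,\dots,R_d\}$ of $X\times X$ into nonempty sets such that $R_0=\{(b,b):b\in X\}$; for each $c$ there is $c'$ with $R_{c'}=\{(f,e):(e,f)\in R_c\}$; and for all $i,j,k$ the intersection number $p_{ij}^k=|\{\ell\in X:(m,\ell)\in R_i,(\ell,n)\in R_j\}|$ does not depend on $(m,n)\in R_k$. The valency is $k_a=p_{aa'}^0$; complex product $R_aR_b=\{R_c:p_{ab}^c>0\}$. For $y\in X$, $yR_a=\{z:(y,z)\in R_a\}$. $A_a\in M_X(\mathbb F)$ is the $(0,1)$ adjacency matrix of $R_a$ and $E_a^*(y)$ is the diagonal $(0,1)$-matrix with ones exactly at positions indexed by $yR_a$. Bad pair: $(u,v)$ is a bad pair of $S$ if there exist an integer $a\ge1$ and $R_{i_b},R_{j_b},R_{\ell_b}\in S$ ($b=0,\dots,a$) with $i_0=u$, $\ell_a=v$, $k_{i_b}=k_{\ell_b}=2$ and $p_{i_bj_b}^{\ell_b}=1$ for all $b$, $\ell_c=i_{c+1}$ for $0\le c\le a-1$, and $|R_{u'}R_v|=1$. *)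

theory Defs
  imports Main
begin

text \<open>The ground set X is the (finite, nonempty) universe of the type 'x.
  A scheme of class d is given by the relations R 0, ..., R d.\<close>

definition is_scheme :: "nat \<Rightarrow> (nat \<Rightarrow> ('x::finite \<times> 'x) set) \<Rightarrow> bool" where
  "is_scheme d R \<longleftrightarrow>
     (\<forall>i\<le>d. R i \<noteq> {}) \<and>
     (\<forall>i\<le>d. \<forall>j\<le>d. i \<noteq> j \<longrightarrow> R i \<inter> R j = {}) \<and>
     (\<Union>i\<in>{..d}. R i) = UNIV \<and>
     R 0 = {(b, b) | b. True} \<and>
     (\<forall>c\<le>d. \<exists>c'\<le>d. R c' = {(f, e). (e, f) \<in> R c}) \<and>
     (\<forall>i\<le>d. \<forall>j\<le>d. \<forall>k\<le>d. \<exists>N. \<forall>(m, n)\<in>R k.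
         card {l. (m, l) \<in> R i \<and> (l, n) \<in> R j} = N)"

text \<open>Intersection number p_{ij}^k, evaluated at some (m,n) in R k
  (independent of the choice for a scheme).\<close>
definition inum :: "(nat \<Rightarrow> ('x::finite \<times> 'x) set) \<Rightarrow> nat \<Rightarrow> nat \<Rightarrow> nat \<Rightarrow> nat" where
  "inum R i j k = (let (m, n) = (SOME mn. mn \<in> R k) in
      card {l. (m, l) \<in> R i \<and> (l, n) \<in> R j})"

definition cidx :: "nat \<Rightarrow> (nat \<Rightarrow> ('x \<times> 'x) set) \<Rightarrow> nat \<Rightarrow> nat" where
  "cidx d R c = (THE c'. c' \<le> d \<and> R c' = {(f, e). (e, f) \<in> R c})"

definition valency :: "nat \<Rightarrow> (nat \<Rightarrow> ('x::finite \<times> 'x) set) \<Rightarrow> nat \<Rightarrow> nat" where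
  "valency d R a = inum R a (cidx d R a) 0"

definition cprod :: "nat \<Rightarrow> (nat \<Rightarrow> ('x::finite \<times> 'x) set) \<Rightarrow> nat \<Rightarrow> nat \<Rightarrow> ('x \<times> 'x) set set" where
  "cprod d R a b = {R c | c. c \<le> d \<and> inum R a b c > 0}"

definition bad_pair :: "nat \<Rightarrow> (nat \<Rightarrow> ('x::finite \<times> 'x) set) \<Rightarrow> nat \<Rightarrow> nat \<Rightarrow> bool" where
  "bad_pair d R u v \<longleftrightarrow>
     (\<exists>(a::nat) (ii::nat \<Rightarrow> nat) (jj::nat \<Rightarrow> nat) (ll::nat \<Rightarrow> nat).
        a \<ge> 1 \<and>
        (\<forall>b\<le>a. ii b \<le> d \<and> jj b \<le> d \<and> ll b \<le> d) \<and>
        ii 0 = u \<and> ll a = v \<and>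
        (\<forall>b\<le>a. valency d R (ii b) = 2 \<and> valency d R (ll b) = 2 \<and>
                inum R (ii b) (jj b) (ll b) = 1) \<and>
        (\<forall>c<a. ll c = ii (Suc c)) \<and>
        card (cprod d R (cidx d R u) v) = 1)"

type_synonym ('x, 'a) xmat = "'x \<Rightarrow> 'x \<Rightarrow> 'a"

definition mmult :: "('x::finite, 'a::field) xmat \<Rightarrow> ('x, 'a) xmat \<Rightarrow> ('x, 'a) xmat" where
  "mmult M N = (\<lambda>y z. \<Sum>w\<in>UNIV. M y w * N w z)"

definition mone :: "('x, 'a::field) xmat" where
  "mone = (\<lambda>y z. if y = z then 1 else 0)"

definition madd :: "('x, 'a::field) xmat \<Rightarrow> ('x, 'a) xmat \<Rightarrow> ('x, 'a) xmat" where
  "madd M N = (\<lambda>y z. M y z + N y z)"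

definition msmult :: "'a::field \<Rightarrow> ('x, 'a) xmat \<Rightarrow> ('x, 'a) xmat" where
  "msmult c M = (\<lambda>y z. c * M y z)"

definition adjm :: "(nat \<Rightarrow> ('x \<times> 'x) set) \<Rightarrow> nat \<Rightarrow> ('x, 'a::field) xmat" where
  "adjm R a = (\<lambda>y z. if (y, z) \<in> R a then 1 else 0)"

definition dualidem :: "(nat \<Rightarrow> ('x \<times> 'x) set) \<Rightarrow> 'x \<Rightarrow> nat \<Rightarrow> ('x, 'a::field) xmat" where
  "dualidem R x a = (\<lambda>y z. if y = z \<and> (x, y) \<in> R a then 1 else 0)"

definition T0 :: "nat \<Rightarrow> (nat \<Rightarrow> ('x::finite \<times> 'x) set) \<Rightarrow> 'x \<Rightarrow> ('x, 'a::field) xmat set" where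
  "T0 d R x = {M. \<exists>c :: nat \<Rightarrow> nat \<Rightarrow> nat \<Rightarrow> 'a.
      M = (\<lambda>y z. \<Sum>i\<le>d. \<Sum>j\<le>d. \<Sum>l\<le>d.
             c i j l * mmult (mmult (dualidem R x i) (adjm R j)) (dualidem R x l) y z)}"

definition unital_subalgebra :: "('x::finite, 'a::field) xmat set \<Rightarrow> bool" where
  "unital_subalgebra T \<longleftrightarrow>
     mone \<in> T \<and>
     (\<forall>M\<in>T. \<forall>N\<in>T. madd M N \<in> T) \<and>
     (\<forall>c. \<forall>M\<in>T. msmult c M \<in> T) \<and>
     (\<forall>M\<in>T. \<forall>N\<in>T. mmult M N \<in> T)"

end

theory Submission
  imports Defs
begin

lemma sch_disj:
  assumes "is_scheme d R" "i \<le> d" "k \<le> d" "p \<in> R i" "p \<in> R k"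
  shows "i = k"
proof -
  have "\<forall>i\<le>d. \<forall>j\<le>d. i \<noteq> j \<longrightarrow> R i \<inter> R j = {}"
    using assms(1) unfolding is_scheme_def by (elim conjE)
  then show ?thesis using assms(2-5) by blast
qed

lemma sch_cover:
  assumes "is_scheme d R"
  shows "\<exists>i\<le>d. p \<in> R i"
proof -
  have "(\<Union>i\<in>{..d}. R i) = UNIV" using assms unfolding is_scheme_def by (elim conjE)
  then have "p \<in> (\<Union>i\<in>{..d}. R i)" by simp
  then show ?thesis by auto
qed

lemma sch_inum:
  assumes "is_scheme d R" "i \<le> d" "j \<le> d" "k \<le> d" "(m, n) \<in> R k"
  shows "inum R i j k = card {l. (m, l) \<in> R i \<and> (l, n) \<in> R j}"
proof -
  have "\<forall>i\<le>d. \<forall>j\<le>d. \<forall>k\<le>d. \<exists>N. \<forall>(m, n)\<in>R k.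
         card {l. (m, l) \<in> R i \<and> (l, n) \<in> R j} = N"
    using assms(1) unfolding is_scheme_def by (elim conjE)
  then obtain N where N: "\<forall>(m, n)\<in>R k. card {l. (m, l) \<in> R i \<and> (l, n) \<in> R j} = N"
    using assms(2-4) by blast
  have "(SOME mn. mn \<in> R k) \<in> R k" using assms(5) by (rule someI)
  then obtain m' n' where mn: "(SOME mn. mn \<in> R k) = (m', n')" "(m', n') \<in> R k"
    by (metis surj_pair)
  have "inum R i j k = card {l. (m', l) \<in> R i \<and> (l, n') \<in> R j}"
    unfolding inum_def mn(1) by simp
  also have "\<dots> = N" using N mn(2) by auto
  also have "\<dots> = card {l. (m, l) \<in> R i \<and> (l, n) \<in> R j}" using N assms(5) by auto
  finally show ?thesis .
qed

lemma sch_ne: assumes "is_scheme d R" "i \<le> d" shows "R i \<noteq> {}"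
proof -
  have "\<forall>i\<le>d. R i \<noteq> {}" using assms(1) unfolding is_scheme_def by (elim conjE)
  then show ?thesis using assms(2) by blast
qed

lemma sch_R0: assumes "is_scheme d R" shows "R 0 = {(b, b) | b. True}"
  using assms unfolding is_scheme_def by (elim conjE)

lemma sch_conv: assumes "is_scheme d R" "c \<le> d" shows "\<exists>c'\<le>d. R c' = {(f, e). (e, f) \<in> R c}"
proof -
  have "\<forall>c\<le>d. \<exists>c'\<le>d. R c' = {(f, e). (e, f) \<in> R c}"
    using assms(1) unfolding is_scheme_def by (elim conjE)
  then show ?thesis using assms(2) by blast
qed

lemma sch_cidx:
  assumes "is_scheme d R" "c \<le> d"
  shows "cidx d R c \<le> d \<and> R (cidx d R c) = {(f, e). (e, f) \<in> R c}"
proof -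
  obtain c' where c': "c' \<le> d" "R c' = {(f, e). (e, f) \<in> R c}"
    using sch_conv[OF assms] by blast
  have uniq: "c'' = c'" if "c'' \<le> d" "R c'' = {(f, e). (e, f) \<in> R c}" for c''
  proof -
    have "R c' \<noteq> {}" using sch_ne[OF assms(1) c'(1)] .
    then obtain p where "p \<in> R c'" by blast
    moreover have "R c'' = R c'" using that(2) c'(2) by (rule trans[OF _ sym])
    ultimately show ?thesis using sch_disj[OF assms(1) that(1) c'(1)] by blast
  qed
  have "cidx d R c = c'" unfolding cidx_def
  proof (rule the_equality)
    show "c' \<le> d \<and> R c' = {(f, e). (e, f) \<in> R c}" using c' by blast
    show "\<And>c''. c'' \<le> d \<and> R c'' = {(f, e). (e, f) \<in> R c} \<Longrightarrow> c'' = c'"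
      using uniq by blast
  qed
  then show ?thesis using c' by simp
qed

lemma sch_val:
  assumes "is_scheme d R" "u \<le> d" "valency d R u = 2"
  shows "card {l. (x, l) \<in> R u} = 2"
proof -
  have ci: "cidx d R u \<le> d" "R (cidx d R u) = {(f, e). (e, f) \<in> R u}"
    using sch_cidx[OF assms(1,2)] by auto
  have x0: "(x, x) \<in> R 0" using sch_R0[OF assms(1)] by simp
  have "valency d R u = card {l. (x, l) \<in> R u \<and> (l, x) \<in> R (cidx d R u)}"
    unfolding valency_def using sch_inum[OF assms(1) assms(2) ci(1) _ x0] by simp
  also have "{l. (x, l) \<in> R u \<and> (l, x) \<in> R (cidx d R u)} = {l. (x, l) \<in> R u}"
    using ci(2) by auto
  finally show ?thesis using assms(3) by simp
qed

lemma sum_one_point: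
  assumes "finite A" "y \<in> A" "\<And>w. w \<in> A \<Longrightarrow> w \<noteq> y \<Longrightarrow> f w = (0::'a::comm_monoid_add)"
  shows "sum f A = f y"
proof -
  have "sum f A = f y + sum f (A - {y})" using assms(1,2) by (rule sum.remove)
  also have "sum f (A - {y}) = 0" using assms(3) by (intro sum.neutral) auto
  finally show ?thesis by simp
qed

lemma entry_EA:
  "mmult (dualidem R x i) (adjm R j) y v =
    (if (x, y) \<in> R i \<and> (y, v) \<in> R j then (1::'a::field) else 0)"
proof -
  have "mmult (dualidem R x i) (adjm R j) y v =
     dualidem R x i y y * (adjm R j y v :: 'a)"
    unfolding mmult_def by (rule sum_one_point) (auto simp: dualidem_def)
  also have "\<dots> = (if (x, y) \<in> R i \<and> (y, v) \<in> R j then (1::'a::field) else 0)"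
    unfolding dualidem_def adjm_def by simp
  finally show ?thesis .
qed

lemma entry_EAE:
  "mmult (mmult (dualidem R x i) (adjm R j)) (dualidem R x l) y z =
    (if (x, y) \<in> R i \<and> (y, z) \<in> R j \<and> (x, z) \<in> R l then (1::'a::field) else 0)"
proof -
  have "mmult (mmult (dualidem R x i) (adjm R j)) (dualidem R x l) y z =
     mmult (dualidem R x i) (adjm R j) y z * (dualidem R x l z z :: 'a)"
    unfolding mmult_def[of "mmult _ _"] by (rule sum_one_point) (auto simp: dualidem_def)
  also have "\<dots> = (if (x, y) \<in> R i \<and> (y, z) \<in> R j \<and> (x, z) \<in> R l then (1::'a::field) else 0)"
    unfolding entry_EA by (simp add: dualidem_def)
  finally show ?thesis .
qed

lemma sum_single:
  assumes "\<And>w. Q w = (if w = w0 then 1 else (0::'a::field))"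
  shows "(\<Sum>w\<in>(UNIV::'x::finite set). P w * Q w) = P w0"
  using assms by (subst sum_one_point[of _ w0]) auto

theorem lemma4p8:
  fixes R :: "nat \<Rightarrow> ('x::finite \<times> 'x) set" and d :: nat and x :: 'x
  assumes "is_scheme d R"
    and "unital_subalgebra (T0 d R x :: ('x, 'a::field) xmat set)"
  shows "\<not> (\<exists>u v. bad_pair d R u v)"
proof
  assume "\<exists>u v. bad_pair d R u v"
  then obtain u v where bp: "bad_pair d R u v" by (elim exE)
  obtain a ii jj ll where H: "a \<ge> 1 \<and>
        (\<forall>b\<le>a. ii b \<le> d \<and> jj b \<le> d \<and> ll b \<le> d) \<and>
        ii 0 = u \<and> ll a = v \<and>
        (\<forall>b\<le>a. valency d R (ii b) = 2 \<and> valency d R (ll b) = 2 \<and>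
                inum R (ii b) (jj b) (ll b) = 1) \<and>
        (\<forall>c<a. ll c = ii (Suc c)) \<and>
        card (cprod d R (cidx d R u) v) = 1"
    using bp unfolding bad_pair_def by (elim exE) (rule that)
  from H have bnd: "\<forall>b\<le>a. ii b \<le> d \<and> jj b \<le> d \<and> ll b \<le> d" by (elim conjE)
  from H have i0: "ii 0 = u" by (elim conjE)
  from H have la: "ll a = v" by (elim conjE)
  from H have val: "\<forall>b\<le>a. valency d R (ii b) = 2 \<and> valency d R (ll b) = 2 \<and>
                inum R (ii b) (jj b) (ll b) = 1" by (elim conjE)
  from H have chain: "\<forall>c<a. ll c = ii (Suc c)" by (elim conjE)
  from H have cp: "card (cprod d R (cidx d R u) v) = 1" by (elim conjE)
  have sch: "is_scheme d R" by fact
  have alg: "unital_subalgebra (T0 d R x :: ('x, 'a) xmat set)" by fact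
  have ud: "u \<le> d" using bnd i0 by auto
  have vd: "v \<le> d" using bnd la by auto
  define Q :: "nat \<Rightarrow> ('x, 'a) xmat" where
    "Q b = mmult (mmult (dualidem R x (ii b)) (adjm R (jj b))) (dualidem R x (ll b))" for b
  define P :: "nat \<Rightarrow> ('x, 'a) xmat" where "P = rec_nat mone (\<lambda>b M. mmult M (Q b))"
  have P0: "P 0 = mone" and PS: "P (Suc b) = mmult (P b) (Q b)" for b
    unfolding P_def by simp_all
  have QT: "Q b \<in> T0 d R x" if "b \<le> a" for b
  proof -
    have bd: "ii b \<le> d" "jj b \<le> d" "ll b \<le> d" using bnd that by auto
    define c :: "nat \<Rightarrow> nat \<Rightarrow> nat \<Rightarrow> 'a" where
      "c = (\<lambda>i j l. if i = ii b \<and> j = jj b \<and> l = ll b then 1 else 0)"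
    define E :: "nat \<Rightarrow> nat \<Rightarrow> nat \<Rightarrow> ('x, 'a) xmat" where
      "E = (\<lambda>i j l. mmult (mmult (dualidem R x i) (adjm R j)) (dualidem R x l))"
    have "(\<Sum>i\<le>d. \<Sum>j\<le>d. \<Sum>l\<le>d. c i j l * E i j l y z) = Q b y z" for y z
    proof -
      have "(\<Sum>i\<le>d. \<Sum>j\<le>d. \<Sum>l\<le>d. c i j l * E i j l y z) =
            (\<Sum>j\<le>d. \<Sum>l\<le>d. c (ii b) j l * E (ii b) j l y z)"
        by (rule sum_one_point) (use bd in \<open>auto simp: c_def\<close>)
      also have "\<dots> = (\<Sum>l\<le>d. c (ii b) (jj b) l * E (ii b) (jj b) l y z)"
        by (rule sum_one_point) (use bd in \<open>auto simp: c_def\<close>)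
      also have "\<dots> = c (ii b) (jj b) (ll b) * E (ii b) (jj b) (ll b) y z"
        by (rule sum_one_point) (use bd in \<open>auto simp: c_def\<close>)
      also have "\<dots> = Q b y z" by (simp add: c_def E_def Q_def)
      finally show ?thesis .
    qed
    then have "Q b = (\<lambda>y z. \<Sum>i\<le>d. \<Sum>j\<le>d. \<Sum>l\<le>d.
             c i j l * mmult (mmult (dualidem R x i) (adjm R j)) (dualidem R x l) y z)"
      unfolding E_def by (intro ext) simp
    then show ?thesis unfolding T0_def by blast
  qed
  have PT: "P b \<in> T0 d R x" if "b \<le> Suc a" for b
    using that
  proof (induction b)
    case 0
    then show ?case using alg P0 unfolding unital_subalgebra_def by simp
  next
    case (Suc b)
    then show ?case using alg PS QT[of b] unfolding unital_subalgebra_def by simp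
  qed
  have inv: "\<forall>z. (x, z) \<in> R (if b = 0 then u else ll (b - 1)) \<longrightarrow>
      (\<exists>y0. (x, y0) \<in> R u \<and> (\<forall>y. P b y z = (if y = y0 then 1 else 0)))"
    if "b \<le> Suc a" for b
    using that
  proof (induction b)
    case 0
    then show ?case using P0 unfolding mone_def by auto
  next
    case (Suc b)
    show ?case
    proof (intro allI impI)
      fix z assume z: "(x, z) \<in> R (if Suc b = 0 then u else ll (Suc b - 1))"
      then have z': "(x, z) \<in> R (ll b)" by simp
      have ba: "b \<le> a" using Suc by simp
      have "card {w. (x, w) \<in> R (ii b) \<and> (w, z) \<in> R (jj b)} = 1"
        using sch_inum[OF sch _ _ _ z', of "ii b" "jj b"] bnd val ba by simp
      then obtain w0 where w0: "{w. (x, w) \<in> R (ii b) \<and> (w, z) \<in> R (jj b)} = {w0}"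
        by (rule card_1_singletonE)
      have Qw: "Q b w z = (if w = w0 then 1 else 0)" for w
        unfolding Q_def entry_EAE using w0 z' by auto
      have Pz: "P (Suc b) y z = P b y w0" for y
        unfolding PS mmult_def by (rule sum_single[OF Qw])
      have "(x, w0) \<in> R (ii b)" using w0 by auto
      moreover have "ii b = (if b = 0 then u else ll (b - 1))"
        using i0 chain ba by (cases b) auto
      ultimately obtain y0 where "(x, y0) \<in> R u" "\<forall>y. P b y w0 = (if y = y0 then 1 else 0)"
        using Suc.IH Suc.prems by fastforce
      then show "\<exists>y0. (x, y0) \<in> R u \<and> (\<forall>y. P (Suc b) y z = (if y = y0 then 1 else 0))"
        using Pz by auto
    qed
  qed
  have va: "valency d R (ll a) = 2" "valency d R (ii 0) = 2" using val by auto
  have cv: "card {l. (x, l) \<in> R v} = 2"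
    using sch_val[OF sch vd] va(1) la by simp
  have "{l. (x, l) \<in> R v} \<noteq> {}"
  proof
    assume "{l. (x, l) \<in> R v} = {}"
    then have "card {l. (x, l) \<in> R v} = 0" by (simp only: card.empty)
    then show False using cv by simp
  qed
  then obtain z where z: "(x, z) \<in> R v" by blast
  have "\<forall>z. (x, z) \<in> R (if Suc a = 0 then u else ll (Suc a - 1)) \<longrightarrow>
      (\<exists>y0. (x, y0) \<in> R u \<and> (\<forall>y. P (Suc a) y z = (if y = y0 then 1 else 0)))"
    using inv[of "Suc a"] by simp
  then have "\<exists>y0. (x, y0) \<in> R u \<and> (\<forall>y. P (Suc a) y z = (if y = y0 then 1 else 0))"
    using z la by simp
  then obtain y0 where y0: "(x, y0) \<in> R u" "\<forall>y. P (Suc a) y z = (if y = y0 then 1 else 0)"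
    by blast
  have cu: "card {l. (x, l) \<in> R u} = 2"
    using sch_val[OF sch ud] va(2) i0 by simp
  have "{l. (x, l) \<in> R u} \<noteq> {y0}"
  proof
    assume "{l. (x, l) \<in> R u} = {y0}"
    then have "card {l. (x, l) \<in> R u} = 1" by simp
    then show False using cu by simp
  qed
  then obtain y1 where y1: "(x, y1) \<in> R u" "y1 \<noteq> y0" using y0(1) by blast
  obtain c0 where c0: "c0 \<le> d" "(y0, z) \<in> R c0" using sch_cover[OF sch] by blast
  obtain c1 where c1: "c1 \<le> d" "(y1, z) \<in> R c1" using sch_cover[OF sch] by blast
  have ci: "cidx d R u \<le> d" "R (cidx d R u) = {(f, e). (e, f) \<in> R u}"
    using sch_cidx[OF sch ud] by auto
  have incp: "R c \<in> cprod d R (cidx d R u) v" if "c \<le> d" "(y, z) \<in> R c" "(x, y) \<in> R u" for c y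
  proof -
    have "inum R (cidx d R u) v c = card {l. (y, l) \<in> R (cidx d R u) \<and> (l, z) \<in> R v}"
      using sch_inum[OF sch ci(1) vd that(1,2)] .
    moreover have "x \<in> {l. (y, l) \<in> R (cidx d R u) \<and> (l, z) \<in> R v}"
      using ci(2) that(3) z by auto
    ultimately have "inum R (cidx d R u) v c > 0"
      by (metis card_gt_0_iff empty_iff finite)
    then show ?thesis unfolding cprod_def using that(1) by auto
  qed
  have "R c0 = R c1"
    using incp[OF c0 y0(1)] incp[OF c1 y1(1)] cp
    by (metis card_1_singletonE singletonD)
  then have "c0 = c1" using sch_disj[OF sch c0(1) c1(1)] c0(2) c1(2) by blast
  then have eqj: "((y0, z) \<in> R j) = ((y1, z) \<in> R j)" if "j \<le> d" for j
    using sch_disj[OF sch that c0(1)] sch_disj[OF sch that c1(1)] c0 c1 by blast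
  have eqi: "((x, y0) \<in> R i) = ((x, y1) \<in> R i)" if "i \<le> d" for i
    using sch_disj[OF sch that ud] y0(1) y1(1) by blast
  obtain cc :: "nat \<Rightarrow> nat \<Rightarrow> nat \<Rightarrow> 'a" where
    cc: "P (Suc a) = (\<lambda>y z. \<Sum>i\<le>d. \<Sum>j\<le>d. \<Sum>l\<le>d.
             cc i j l * mmult (mmult (dualidem R x i) (adjm R j)) (dualidem R x l) y z)"
    using PT[of "Suc a"] unfolding T0_def by blast
  have "P (Suc a) y0 z = P (Suc a) y1 z"
    unfolding cc entry_EAE
    by (intro sum.cong refl) (simp add: eqi eqj)
  then show False using y0(2) y1(2) by simp
qed

end
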